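(* Let $G$ be a finite connected graph (loops and multiple edges allowed) with a cut vertex $v$, and let $G=H_1\vee H_2$ be a decomposition associated to $v$, i.e. $H_1,H_2$ are connected subgraphs of $G$ with $V(H_1)\cap V(H_2)=\{v\}$, $E(H_1)\cap E(H_2)=\emptyset$ and $H_1\cup H_2=G$. For $D_j\in\operatorname{Div}(H_j)$ ($j=1,2$) define $D_1+D_2\in\operatorname{Div}(G)$ by $(D_1+D_2)(v)=D_1(v)+D_2(v)$, $(D_1+D_2)(u)=D_1(u)$ for $u\in V(H_1)\setminus\{v\}$ and $(D_1+D_2)(u)=D_2(u)$ for $u\in V(H_2)\setminus\{v\}$. Then: (1) The map $\operatorname{Div}(H_1)\oplus\operatorname{Div}(H_2)\to\operatorname{Div}(G)$, $(D_1,D_2)\mapsto D_1+D_2$, is a surjective homomorphism with kernel isomorphic to $\mathbb{Z}$; it induces an isomorphism $\operatorname{Prin}(H_1)\oplus\operatorname{Prin}(H_2)\cong\operatorname{Prin}(G)$ and an exact sequence $0\to\mathbb{Z}\to\operatorname{Jac}(H_1)\oplus\operatorname{Jac}(H_2)\to\operatorname{Jac}(G)\to 0$. (2) For $j=1,2$, the extension-by-zero map $\operatorname{Div}(H_j)\to\operatorname{Div}(G)$ is injective, maps $\operatorname{Prin}(H_j)$ injectively into $\operatorname{Prin}(G)$, and induces an injective map $\operatorname{Jac}(H_j)\to\operatorname{Jac}(G)$, so that the diagram formed by the exact sequences $0\to\operatorname{Prin}\to\operatorname{Div}\to\operatorname{Jac}\to0$ for $H_j$ and for $G$ commutes with injective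 vertical arrows. (3) For all $D_1\in\operatorname{Div}(H_1)$, $D_2\in\operatorname{Div}(H_2)$ we have $r_G(D_1+D_2)\ge\min\{r_{H_1}(D_1),r_{H_2}(D_2)\}$. (4) For $j=1,2$ and every $D_j\in\operatorname{Div}(H_j)$ (viewed in $\operatorname{Div}(G)$ by extension by zero) we have $r_{H_j}(D_j)\ge r_G(D_j)$.
   Context: Graphs are finite and connected, loops and multiple edges allowed. For a graph $G$, $\operatorname{Div}(G)$ is the free abelian group on $V(G)$; write $D=\sum_v D(v)v$, $\deg D=\sum_v D(v)$, and $D\ge0$ (effective) if all $D(v)\ge0$. Define $(v\cdot w)$ as the number of edges joining $v$ and $w$ if $v\ne w$, and $(v\cdot v)=-\operatorname{val}(v)+2\operatorname{loop}(v)$, where $\operatorname{val}(v)$ is the valency (a loop counts twice) and $\operatorname{loop}(v)$ the number of loops at $v$. Set $T_v=\sum_{w\in V(G)}(v\cdot w)w$; $\operatorname{Prin}(G)$ is the subgroup generated by all $T_v$, $D\sim D'$ iff $D-D'\in\operatorname{Prin}(G)$, and $\operatorname{Jac}(G)=\operatorname{Div}(G)/\operatorname{Prin}(G)$. Let $|D|=\{E\ge0: E\sim D\}$. The rank $r_G(D)$ is $-1$ if $|D|=\emptyset$, and otherwise the maximum $k\ge0$ such that $|D-E|\neq\emptyset$ for every effective $E$ of degree $k$. *)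

theory Defs
  imports "HOL-Algebra.Elementary_Groups" "HOL-Algebra.Coset" "HOL-Library.Function_Algebras"
begin

text \<open>A graph is given by a vertex set, an edge set and, for each edge, the
  (unordered) pair of its end vertices, stored as an ordered pair;
  an edge e is a loop iff both components of gends e coincide.\<close>

record ('v, 'e) mgraph =
  gverts :: "'v set"
  gedges :: "'e set"
  gends  :: "'e \<Rightarrow> 'v \<times> 'v"

definition wf_graph :: "('v, 'e) mgraph \<Rightarrow> bool" where
  "wf_graph G \<longleftrightarrow> finite (gverts G) \<and> finite (gedges G) \<and>
     (\<forall>e\<in>gedges G. fst (gends G e) \<in> gverts G \<and> snd (gends G e) \<in> gverts G)"

definition adj :: "('v, 'e) mgraph \<Rightarrow> ('v \<times> 'v) set" where
  "adj G = {(u, w). \<exists>e\<in>gedges G. gends G e = (u, w) \<or> gends G e = (w, u)}"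

definition connected_graph :: "('v, 'e) mgraph \<Rightarrow> bool" where
  "connected_graph G \<longleftrightarrow> wf_graph G \<and> gverts G \<noteq> {} \<and>
     (\<forall>u\<in>gverts G. \<forall>w\<in>gverts G. (u, w) \<in> (adj G)\<^sup>*)"

definition delete_vertex :: "('v, 'e) mgraph \<Rightarrow> 'v \<Rightarrow> ('v, 'e) mgraph" where
  "delete_vertex G v =
     \<lparr>gverts = gverts G - {v},
      gedges = {e\<in>gedges G. fst (gends G e) \<noteq> v \<and> snd (gends G e) \<noteq> v},
      gends = gends G\<rparr>"

definition cut_vertex :: "('v, 'e) mgraph \<Rightarrow> 'v \<Rightarrow> bool" where
  "cut_vertex G v \<longleftrightarrow> v \<in> gverts G \<and>
     (\<exists>u\<in>gverts G - {v}. \<exists>w\<in>gverts G - {v}.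
        (u, w) \<notin> (adj (delete_vertex G v))\<^sup>*)"

definition subgraph :: "('v, 'e) mgraph \<Rightarrow> ('v, 'e) mgraph \<Rightarrow> bool" where
  "subgraph H G \<longleftrightarrow> gverts H \<subseteq> gverts G \<and> gedges H \<subseteq> gedges G \<and>
     (\<forall>e\<in>gedges H. gends H e = gends G e)"

definition wedge_decomp ::
  "('v, 'e) mgraph \<Rightarrow> 'v \<Rightarrow> ('v, 'e) mgraph \<Rightarrow> ('v, 'e) mgraph \<Rightarrow> bool" where
  "wedge_decomp G v H1 H2 \<longleftrightarrow>
     subgraph H1 G \<and> subgraph H2 G \<and> connected_graph H1 \<and> connected_graph H2 \<and>
     gverts H1 \<inter> gverts H2 = {v} \<and> gedges H1 \<inter> gedges H2 = {} \<and>
     gverts H1 \<union> gverts H2 = gverts G \<and> gedges H1 \<union> gedges H2 = gedges G"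

definition nedges :: "('v, 'e) mgraph \<Rightarrow> 'v \<Rightarrow> 'v \<Rightarrow> nat" where
  "nedges G v w = card {e\<in>gedges G. gends G e = (v, w) \<or> gends G e = (w, v)}"

definition nloops :: "('v, 'e) mgraph \<Rightarrow> 'v \<Rightarrow> nat" where
  "nloops G v = card {e\<in>gedges G. gends G e = (v, v)}"

text \<open>Valency; a loop counts twice.\<close>
definition valency :: "('v, 'e) mgraph \<Rightarrow> 'v \<Rightarrow> nat" where
  "valency G v = card {e\<in>gedges G. fst (gends G e) = v} + card {e\<in>gedges G. snd (gends G e) = v}"

definition inum :: "('v, 'e) mgraph \<Rightarrow> 'v \<Rightarrow> 'v \<Rightarrow> int" where
  "inum G v w = (if v \<noteq> w then int (nedges G v w)
                 else - int (valency G v) + 2 * int (nloops G v))"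

definition divs :: "('v, 'e) mgraph \<Rightarrow> ('v \<Rightarrow> int) set" where
  "divs G = {D. \<forall>u. u \<notin> gverts G \<longrightarrow> D u = 0}"

definition deg :: "('v, 'e) mgraph \<Rightarrow> ('v \<Rightarrow> int) \<Rightarrow> int" where
  "deg G D = (\<Sum>u\<in>gverts G. D u)"

definition effective :: "('v \<Rightarrow> int) \<Rightarrow> bool" where
  "effective D \<longleftrightarrow> (\<forall>u. D u \<ge> 0)"

definition Tdiv :: "('v, 'e) mgraph \<Rightarrow> 'v \<Rightarrow> 'v \<Rightarrow> int" where
  "Tdiv G v = (\<lambda>w. if w \<in> gverts G then inum G v w else 0)"

text \<open>Prin(G): the subgroup generated by the T_v (V(G) finite, so integer combinations).\<close>
definition prin :: "('v, 'e) mgraph \<Rightarrow> ('v \<Rightarrow> int) set" where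
  "prin G = {D. \<exists>c :: 'v \<Rightarrow> int. D = (\<lambda>w. \<Sum>u\<in>gverts G. c u * Tdiv G u w)}"

definition lin_equiv :: "('v, 'e) mgraph \<Rightarrow> ('v \<Rightarrow> int) \<Rightarrow> ('v \<Rightarrow> int) \<Rightarrow> bool" where
  "lin_equiv G D D' \<longleftrightarrow> D - D' \<in> prin G"

definition linsys :: "('v, 'e) mgraph \<Rightarrow> ('v \<Rightarrow> int) \<Rightarrow> ('v \<Rightarrow> int) set" where
  "linsys G D = {E \<in> divs G. effective E \<and> lin_equiv G E D}"

definition rank :: "('v, 'e) mgraph \<Rightarrow> ('v \<Rightarrow> int) \<Rightarrow> int" where
  "rank G D = (if linsys G D = {} then -1
     else int (GREATEST k::nat. \<forall>E\<in>divs G. effective E \<and> deg G E = int k \<longrightarrow>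
                                  linsys G (D - E) \<noteq> {}))"

definition Div_grp :: "('v, 'e) mgraph \<Rightarrow> ('v \<Rightarrow> int) monoid" where
  "Div_grp G = \<lparr>carrier = divs G, monoid.mult = (+), one = 0\<rparr>"

definition Prin_grp :: "('v, 'e) mgraph \<Rightarrow> ('v \<Rightarrow> int) monoid" where
  "Prin_grp G = \<lparr>carrier = prin G, monoid.mult = (+), one = 0\<rparr>"

definition Jac_grp :: "('v, 'e) mgraph \<Rightarrow> ('v \<Rightarrow> int) set monoid" where
  "Jac_grp G = Div_grp G Mod prin G"

definition jcls :: "('v, 'e) mgraph \<Rightarrow> ('v \<Rightarrow> int) \<Rightarrow> ('v \<Rightarrow> int) set" where
  "jcls G D = r_coset (Div_grp G) (prin G) D"

definition ext0 :: "('v, 'e) mgraph \<Rightarrow> ('v \<Rightarrow> int) \<Rightarrow> 'v \<Rightarrow> int" where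
  "ext0 H D = (\<lambda>u. if u \<in> gverts H then D u else 0)"

definition glue :: "('v, 'e) mgraph \<Rightarrow> ('v, 'e) mgraph \<Rightarrow>
    ('v \<Rightarrow> int) \<times> ('v \<Rightarrow> int) \<Rightarrow> 'v \<Rightarrow> int" where
  "glue H1 H2 = (\<lambda>(D1, D2). \<lambda>u. ext0 H1 D1 u + ext0 H2 D2 u)"

end

theory Submission
  imports Defs
begin


definition ec :: "'v \<times> 'v \<Rightarrow> 'v \<Rightarrow> 'v \<Rightarrow> int" where
  "ec p u w = (if u \<noteq> w then (if p = (u,w) \<or> p = (w,u) then 1 else 0)
     else - (if fst p = u then 1 else 0) - (if snd p = u then 1 else 0) + 2 * (if p = (u,u) then 1 else 0))"

lemma card_int: "finite A \<Longrightarrow> int (card {e\<in>A. P e}) = (\<Sum>e\<in>A. if P e then 1 else 0)"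
  by (simp add: sum.inter_filter[symmetric])

lemma inum_ec:
  assumes "finite (gedges H)"
  shows "inum H u w = (\<Sum>e\<in>gedges H. ec (gends H e) u w)"
proof (cases "u = w")
  case True
  have "(\<Sum>e\<in>gedges H. ec (gends H e) u w) = 
     - (\<Sum>e\<in>gedges H. if fst (gends H e) = u then 1 else 0) - (\<Sum>e\<in>gedges H. if snd (gends H e) = u then 1 else 0)
     + 2 * (\<Sum>e\<in>gedges H. if gends H e = (u,u) then 1 else 0)"
    using True by (simp add: ec_def sum.distrib sum_subtractf sum_distrib_left sum_negf)
  then show ?thesis using True assms
    by (simp add: inum_def valency_def nloops_def card_int)
next
  case False
  then show ?thesis using assms
    by (simp add: inum_def nedges_def card_int ec_def)
qed




lemma ec_sym: "ec p u w = ec p w u"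
  by (cases p) (auto simp: ec_def)

lemma ec_zero: "u \<notin> {fst p, snd p} \<or> w \<notin> {fst p, snd p} \<Longrightarrow> ec p u w = 0"
  by (cases p) (auto simp: ec_def)

lemma ec_row:
  assumes "finite V" "fst p \<in> V" "snd p \<in> V"
  shows "(\<Sum>w\<in>V. ec p u w) = 0"
proof -
  obtain a b where p: "p = (a,b)" by (cases p)
  have "(\<Sum>w\<in>V. ec p u w) = (\<Sum>w\<in>{a,b}. ec p u w)"
    apply (rule sum.mono_neutral_right) using assms p apply auto by (metis ec_zero fst_conv insert_iff singletonD snd_conv)
  also have "\<dots> = 0"
    by (cases "a = b") (auto simp: p ec_def)
  finally show ?thesis .
qed

lemma wfD: "wf_graph H \<Longrightarrow> e \<in> gedges H \<Longrightarrow> fst (gends H e) \<in> gverts H \<and> snd (gends H e) \<in> gverts H"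
  by (simp add: wf_graph_def)

lemma inum_sym: "wf_graph H \<Longrightarrow> inum H u w = inum H w u"
  by (simp add: inum_ec wf_graph_def ec_sym[of _ u])

lemma inum_zero: "wf_graph H \<Longrightarrow> u \<notin> gverts H \<or> w \<notin> gverts H \<Longrightarrow> inum H u w = 0"
  apply (simp add: inum_ec wf_graph_def)
  apply (rule sum.neutral)
  apply (metis ec_zero insert_iff singletonD)
  done

lemma inum_row: "wf_graph H \<Longrightarrow> (\<Sum>w\<in>gverts H. inum H u w) = 0"
  apply (simp add: inum_ec wf_graph_def)
  apply (subst sum.swap)
  apply (rule sum.neutral)
  apply (simp add: ec_row)
  done

lemma inum_col: "wf_graph H \<Longrightarrow> (\<Sum>u\<in>gverts H. inum H u w) = 0"
  using inum_row[of H w] inum_sym[of H] by simp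

lemma Tdiv_eq: "wf_graph H \<Longrightarrow> Tdiv H u = (\<lambda>w. inum H u w)"
  by (auto simp: Tdiv_def fun_eq_iff inum_zero)




lemma prin_iff: "wf_graph H \<Longrightarrow> P \<in> prin H \<longleftrightarrow> (\<exists>c. P = (\<lambda>w. \<Sum>u\<in>gverts H. c u * inum H u w))"
  by (simp add: prin_def Tdiv_eq)

lemma prin_divs: "wf_graph H \<Longrightarrow> P \<in> prin H \<Longrightarrow> P \<in> divs H"
  by (auto simp: prin_iff divs_def inum_zero)

lemma prin_0: "wf_graph H \<Longrightarrow> 0 \<in> prin H"
  by (simp add: prin_iff) (rule exI[of _ "\<lambda>_. 0"], simp add: fun_eq_iff)

lemma prin_add: "wf_graph H \<Longrightarrow> P \<in> prin H \<Longrightarrow> Q \<in> prin H \<Longrightarrow> P + Q \<in> prin H"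
  apply (clarsimp simp: prin_iff)
  subgoal for c d by (rule exI[of _ "\<lambda>u. c u + d u"]) (simp add: fun_eq_iff algebra_simps sum.distrib)
  done

lemma prin_uminus: "wf_graph H \<Longrightarrow> P \<in> prin H \<Longrightarrow> - P \<in> prin H"
  apply (clarsimp simp: prin_iff)
  subgoal for c by (rule exI[of _ "\<lambda>u. - c u"]) (simp add: fun_eq_iff sum_negf)
  done

lemma prin_diff: "wf_graph H \<Longrightarrow> P \<in> prin H \<Longrightarrow> Q \<in> prin H \<Longrightarrow> P - Q \<in> prin H"
  using prin_add[of H P "- Q"] prin_uminus[of H Q] by simp

lemma deg_add: "deg H (A + B) = deg H A + deg H B"
  by (simp add: deg_def sum.distrib)
lemma deg_diff: "deg H (A - B) = deg H A - deg H B"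
  by (simp add: deg_def sum_subtractf)
lemma deg_uminus: "deg H (- A) = - deg H A"
  by (simp add: deg_def sum_negf)
lemma deg_0[simp]: "deg H 0 = 0"
  by (simp add: deg_def)

lemma deg_prin: "wf_graph H \<Longrightarrow> P \<in> prin H \<Longrightarrow> deg H P = 0"
  apply (clarsimp simp: prin_iff deg_def)
  apply (subst sum.swap)
  apply (simp add: sum_distrib_left[symmetric] inum_row)
  done

lemma prin_shift: "wf_graph H \<Longrightarrow>
  (\<Sum>u\<in>gverts H. (c u + a) * inum H u w) = (\<Sum>u\<in>gverts H. c u * inum H u w)"
  by (simp add: distrib_right sum.distrib sum_distrib_left[symmetric] inum_col)

lemma divs_add: "A \<in> divs H \<Longrightarrow> B \<in> divs H \<Longrightarrow> A + B \<in> divs H"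
  by (simp add: divs_def)
lemma divs_diff: "A \<in> divs H \<Longrightarrow> B \<in> divs H \<Longrightarrow> A - B \<in> divs H"
  by (simp add: divs_def)
lemma divs_uminus: "A \<in> divs H \<Longrightarrow> - A \<in> divs H"
  by (simp add: divs_def)
lemma divs_0: "0 \<in> divs H"
  by (simp add: divs_def)
lemma ext0_divs: "D \<in> divs H \<Longrightarrow> ext0 H D = D"
  by (auto simp: ext0_def divs_def fun_eq_iff)




locale wdec =
  fixes G :: "('v,'e) mgraph" and v :: 'v and H1 H2 :: "('v,'e) mgraph"
  assumes wfG: "wf_graph G" and dec: "wedge_decomp G v H1 H2"
begin

lemma wf1: "wf_graph H1" and wf2: "wf_graph H2"
  using dec by (auto simp: wedge_decomp_def connected_graph_def)

lemma V12: "gverts H1 \<inter> gverts H2 = {v}" and VG: "gverts H1 \<union> gverts H2 = gverts G"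
  and E12: "gedges H1 \<inter> gedges H2 = {}" and EG: "gedges H1 \<union> gedges H2 = gedges G"
  and sub1: "subgraph H1 G" and sub2: "subgraph H2 G"
  using dec by (auto simp: wedge_decomp_def)

lemma v1: "v \<in> gverts H1" and v2: "v \<in> gverts H2" using V12 by auto
lemma V1G: "gverts H1 \<subseteq> gverts G" using VG by auto
lemma V2G: "gverts H2 \<subseteq> gverts G" using VG by auto
lemma not1: "u \<in> gverts H2 \<Longrightarrow> u \<noteq> v \<Longrightarrow> u \<notin> gverts H1" using V12 by auto

lemma inum_split: "inum G u w = inum H1 u w + inum H2 u w"
proof -
  have fin: "finite (gedges H1)" "finite (gedges H2)" using wf1 wf2 by (auto simp: wf_graph_def)
  have "inum G u w = (\<Sum>e\<in>gedges H1 \<union> gedges H2. ec (gends G e) u w)"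
    using wfG EG by (simp add: inum_ec wf_graph_def)
  also have "\<dots> = (\<Sum>e\<in>gedges H1. ec (gends G e) u w) + (\<Sum>e\<in>gedges H2. ec (gends G e) u w)"
    by (rule sum.union_disjoint) (use fin E12 in auto)
  also have "(\<Sum>e\<in>gedges H1. ec (gends G e) u w) = inum H1 u w"
    using fin sub1 by (simp add: inum_ec subgraph_def)
  also have "(\<Sum>e\<in>gedges H2. ec (gends G e) u w) = inum H2 u w"
    using fin sub2 by (simp add: inum_ec subgraph_def)
  finally show ?thesis .
qed

lemma divs1G: "D \<in> divs H1 \<Longrightarrow> D \<in> divs G"
  using V1G by (auto simp: divs_def)

lemma sum_restr1: "(\<Sum>u\<in>gverts G. c u * inum H1 u w) = (\<Sum>u\<in>gverts H1. c u * inum H1 u w)"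
  apply (rule sum.mono_neutral_right) using wfG V1G wf1 by (auto simp: wf_graph_def inum_zero[OF wf1])
end

lemma wdec_sym: "wdec G v H1 H2 \<Longrightarrow> wdec G v H2 H1"
  by (auto simp: wdec_def wedge_decomp_def)

context wdec begin

lemma prin_split: "P \<in> prin G \<Longrightarrow> \<exists>P1\<in>prin H1. \<exists>P2\<in>prin H2. P = P1 + P2"
proof -
  assume "P \<in> prin G"
  then obtain c where c: "P = (\<lambda>w. \<Sum>u\<in>gverts G. c u * inum G u w)" using wfG by (auto simp: prin_iff)
  interpret s: wdec G v H2 H1 by (rule wdec_sym) (unfold_locales)
  have "P = (\<lambda>w. \<Sum>u\<in>gverts H1. c u * inum H1 u w) + (\<lambda>w. \<Sum>u\<in>gverts H2. c u * inum H2 u w)"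
    by (simp add: c fun_eq_iff inum_split distrib_left sum.distrib sum_restr1 s.sum_restr1)
  moreover have "(\<lambda>w. \<Sum>u\<in>gverts H1. c u * inum H1 u w) \<in> prin H1"
    unfolding prin_iff[OF wf1] by blast
  moreover have "(\<lambda>w. \<Sum>u\<in>gverts H2. c u * inum H2 u w) \<in> prin H2"
    unfolding prin_iff[OF wf2] by blast
  ultimately show ?thesis by blast
qed

lemma prin1G: "P \<in> prin H1 \<Longrightarrow> P \<in> prin G"
proof -
  assume "P \<in> prin H1"
  then obtain c where c: "P = (\<lambda>w. \<Sum>u\<in>gverts H1. c u * inum H1 u w)" using wf1 by (auto simp: prin_iff)
  define c' where "c' = (\<lambda>u. if u \<in> gverts H1 then c u + (- c v) else 0)"
  interpret s: wdec G v H2 H1 by (rule wdec_sym) (unfold_locales)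
  have "(\<lambda>w. \<Sum>u\<in>gverts G. c' u * inum G u w) = P"
  proof
    fix w
    have "(\<Sum>u\<in>gverts G. c' u * inum G u w) = (\<Sum>u\<in>gverts H1. c' u * inum H1 u w) + (\<Sum>u\<in>gverts H2. c' u * inum H2 u w)"
      by (simp add: inum_split distrib_left sum.distrib sum_restr1 s.sum_restr1)
    also have "(\<Sum>u\<in>gverts H2. c' u * inum H2 u w) = 0"
      by (rule sum.neutral) (use V12 in \<open>auto simp: c'_def\<close>)
    also have "(\<Sum>u\<in>gverts H1. c' u * inum H1 u w) = (\<Sum>u\<in>gverts H1. (c u + (- c v)) * inum H1 u w)"
      by (rule sum.cong) (auto simp: c'_def)
    also have "\<dots> = P w" using prin_shift[OF wf1, of c "- c v" w] c by simp
    finally show "(\<Sum>u\<in>gverts G. c' u * inum G u w) = P w" by simp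
  qed
  then show ?thesis using wfG by (auto simp: prin_iff)
qed

end



definition dl :: "'v \<Rightarrow> int \<Rightarrow> 'v \<Rightarrow> int" where "dl v a = (\<lambda>u. if u = v then a else 0)"


lemma deg_dl: "finite (gverts H) \<Longrightarrow> v \<in> gverts H \<Longrightarrow> deg H (dl v a) = a"
  by (simp add: deg_def dl_def)

lemma dl_divs: "v \<in> gverts H \<Longrightarrow> dl v a \<in> divs H"
  by (simp add: divs_def dl_def)

context wdec begin

lemma glue_eq: "D1 \<in> divs H1 \<Longrightarrow> D2 \<in> divs H2 \<Longrightarrow> glue H1 H2 (D1, D2) = D1 + D2"
  by (simp add: glue_def ext0_divs fun_eq_iff)

lemma fin1: "finite (gverts H1)" and fin2: "finite (gverts H2)" and finG: "finite (gverts G)"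
  using wf1 wf2 wfG by (auto simp: wf_graph_def)

lemma kernel_char:
  assumes "D1 \<in> divs H1" "D2 \<in> divs H2" "D1 + D2 = 0"
  shows "D1 = dl v (D1 v) \<and> D2 = dl v (- D1 v)"
proof -
  have "D1 u = 0" if "u \<noteq> v" for u
  proof (cases "u \<in> gverts H1")
    case True
    then have "u \<notin> gverts H2" using V12 that by auto
    then have "D2 u = 0" using assms(2) by (simp add: divs_def)
    then show ?thesis using fun_cong[OF assms(3), of u] by simp
  next
    case False then show ?thesis using assms(1) by (simp add: divs_def)
  qed
  moreover have "D2 u = 0" if "u \<noteq> v" for u
    using calculation[OF that] fun_cong[OF assms(3), of u] by simp
  moreover have "D2 v = - D1 v" using fun_cong[OF assms(3), of v] by simp
  ultimately show ?thesis by (auto simp: dl_def fun_eq_iff)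
qed

lemma prin_inj:
  assumes "P1 \<in> prin H1" "P2 \<in> prin H2" "P1 + P2 = 0"
  shows "P1 = 0 \<and> P2 = 0"
proof -
  have k: "P1 = dl v (P1 v) \<and> P2 = dl v (- P1 v)"
    using kernel_char assms prin_divs wf1 wf2 by blast
  have "deg H1 P1 = 0" using deg_prin[OF wf1 assms(1)] .
  then have "P1 v = 0" using k deg_dl[OF fin1 v1, of "P1 v"] by simp
  then show ?thesis using k by (simp add: dl_def fun_eq_iff)
qed

definition restr1 :: "('v \<Rightarrow> int) \<Rightarrow> 'v \<Rightarrow> int" where
  "restr1 F = (\<lambda>u. if u \<in> gverts H1 then F u + (if u = v then (\<Sum>x\<in>gverts H2 - {v}. F x) else 0) else 0)"

lemma restr1_divs: "restr1 F \<in> divs H1"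
  by (simp add: restr1_def divs_def)

lemma restr1_eff: "effective F \<Longrightarrow> effective (restr1 F)"
  by (auto simp: restr1_def effective_def intro!: sum_nonneg add_nonneg_nonneg)

lemma restr1_prin:
  assumes "F \<in> divs G" "X \<in> divs H1" "F - X \<in> prin G"
  shows "restr1 F - X \<in> prin H1"
proof -
  obtain P1 P2 where P: "P1 \<in> prin H1" "P2 \<in> prin H2" "F - X = P1 + P2"
    using prin_split[OF assms(3)] by blast
  have P1d: "P1 \<in> divs H1" and P2d: "P2 \<in> divs H2" using P prin_divs wf1 wf2 by auto
  have eq: "F u - X u = P1 u + P2 u" for u using fun_cong[OF P(3), of u] by simp
  have P2u: "P2 u = F u" if "u \<in> gverts H2 - {v}" for u
  proof -
    have "u \<notin> gverts H1" using that V12 by auto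
    then have "X u = 0" "P1 u = 0" using assms(2) P1d by (auto simp: divs_def)
    then show ?thesis using eq[of u] by simp
  qed
  have "0 = deg H2 P2" using deg_prin[OF wf2 P(2)] by simp
  also have "\<dots> = P2 v + (\<Sum>x\<in>gverts H2 - {v}. P2 x)"
    unfolding deg_def using fin2 v2 by (simp add: sum.remove)
  also have "(\<Sum>x\<in>gverts H2 - {v}. P2 x) = (\<Sum>x\<in>gverts H2 - {v}. F x)"
    by (rule sum.cong) (auto simp: P2u)
  finally have P2v: "P2 v = - (\<Sum>x\<in>gverts H2 - {v}. F x)" by simp
  have "restr1 F - X = P1"
  proof
    fix u
    show "(restr1 F - X) u = P1 u"
    proof (cases "u \<in> gverts H1")
      case True
      show ?thesis
      proof (cases "u = v")
        case True then show ?thesis using eq[of v] P2v v1 by (simp add: restr1_def)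
      next
        case False
        then have "u \<notin> gverts H2" using \<open>u \<in> gverts H1\<close> V12 by auto
        then have "P2 u = 0" using P2d by (simp add: divs_def)
        then show ?thesis using eq[of u] True False by (simp add: restr1_def)
      qed
    next
      case False
      then show ?thesis using assms(2) P1d by (simp add: restr1_def divs_def)
    qed
  qed
  then show ?thesis using P(1) by simp
qed

lemma prinG_divs1: "X \<in> divs H1 \<Longrightarrow> X \<in> prin G \<Longrightarrow> X \<in> prin H1"
proof -
  assume a: "X \<in> divs H1" "X \<in> prin G"
  have r0: "restr1 0 = 0" by (simp add: restr1_def fun_eq_iff)
  have "0 - X \<in> prin G" using prin_uminus[OF wfG a(2)] by simp
  then have "restr1 0 - X \<in> prin H1" using restr1_prin[of 0 X] divs_0 a(1) by blast
  then have "- X \<in> prin H1" using r0 by simp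
  from prin_uminus[OF wf1 this] show "X \<in> prin H1" by simp
qed

end



lemma linsys_mono:
  assumes "wf_graph H" "F \<in> linsys H (D - (E + A))" "A \<in> divs H" "effective A"
  shows "F + A \<in> linsys H (D - E)"
proof -
  have eq: "F + A - (D - E) = F - (D - (E + A))" by (simp add: algebra_simps)
  have p: "F + A - (D - E) \<in> prin H" unfolding eq using assms(2) by (simp add: linsys_def lin_equiv_def)
  show ?thesis using assms p
    by (auto simp: linsys_def lin_equiv_def effective_def intro: divs_add add_nonneg_nonneg)
qed

lemma deg_eff: "effective E \<Longrightarrow> deg H E \<ge> 0"
  by (auto simp: deg_def effective_def intro: sum_nonneg)

lemma linsys_deg: "wf_graph H \<Longrightarrow> F \<in> linsys H X \<Longrightarrow> deg H X \<ge> 0"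
proof -
  assume a: "wf_graph H" "F \<in> linsys H X"
  then have "deg H (F - X) = 0" "deg H F \<ge> 0"
    by (auto simp: linsys_def lin_equiv_def deg_prin deg_eff)
  then show ?thesis by (simp add: deg_diff)
qed

lemma eff_deg0: "finite (gverts H) \<Longrightarrow> E \<in> divs H \<Longrightarrow> effective E \<Longrightarrow> deg H E = 0 \<Longrightarrow> E = 0"
  by (auto simp: deg_def effective_def divs_def fun_eq_iff sum_nonneg_eq_0_iff)

lemma rank_bound:
  assumes "wf_graph H" "x0 \<in> gverts H"
    and P: "\<forall>E\<in>divs H. effective E \<and> deg H E = int k \<longrightarrow> linsys H (D - E) \<noteq> {}"
  shows "k \<le> nat (deg H D)"
proof -
  have fin: "finite (gverts H)" using assms by (simp add: wf_graph_def)
  have "linsys H (D - dl x0 (int k)) \<noteq> {}"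
    using P dl_divs[OF assms(2)] deg_dl[OF fin assms(2)] by (auto simp: effective_def dl_def)
  then have "deg H (D - dl x0 (int k)) \<ge> 0" using linsys_deg[OF assms(1)] by blast
  then show ?thesis using deg_dl[OF fin assms(2)] by (simp add: deg_diff)
qed

lemma rank_ge:
  assumes "wf_graph H" "gverts H \<noteq> {}" "linsys H D \<noteq> {}"
    and P: "\<forall>E\<in>divs H. effective E \<and> deg H E = int k \<longrightarrow> linsys H (D - E) \<noteq> {}"
  shows "rank H D \<ge> int k"
proof -
  obtain x0 where x0: "x0 \<in> gverts H" using assms(2) by blast
  have "k \<le> (GREATEST k::nat. \<forall>E\<in>divs H. effective E \<and> deg H E = int k \<longrightarrow> linsys H (D - E) \<noteq> {})"
    by (rule Greatest_le_nat[where b = "nat (deg H D)"]) (use P rank_bound[OF assms(1) x0] in auto)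
  then show ?thesis using assms(3) by (simp add: rank_def)
qed

lemma rank_use:
  assumes "wf_graph H" "gverts H \<noteq> {}" "int k \<le> rank H D"
    and E: "E \<in> divs H" "effective E" "deg H E \<le> int k"
  shows "linsys H (D - E) \<noteq> {}"
proof -
  obtain x0 where x0: "x0 \<in> gverts H" using assms(2) by blast
  have fin: "finite (gverts H)" using assms by (simp add: wf_graph_def)
  define Pk where "Pk = (\<lambda>k::nat. \<forall>E\<in>divs H. effective E \<and> deg H E = int k \<longrightarrow> linsys H (D - E) \<noteq> {})"
  have ne: "linsys H D \<noteq> {}" using assms(3) by (auto simp: rank_def split: if_splits)
  have P0: "Pk 0" unfolding Pk_def
  proof (intro ballI impI)
    fix E assume "E \<in> divs H" "effective E \<and> deg H E = int 0"
    then have "E = 0" using eff_deg0[OF fin] by simp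
    then show "linsys H (D - E) \<noteq> {}" using ne by simp
  qed
  have bd: "\<forall>y. Pk y \<longrightarrow> y \<le> nat (deg H D)" using rank_bound[OF assms(1) x0] by (auto simp: Pk_def)
  define m where "m = (GREATEST k. Pk k)"
  have Pm: "Pk m" unfolding m_def by (rule GreatestI_nat[where P=Pk, OF P0]) (use bd in auto)
  have km: "int k \<le> int m" using assms(3) ne by (simp add: rank_def m_def Pk_def)
  define A where "A = dl x0 (int m - deg H E)"
  have A: "A \<in> divs H" "effective A" "deg H A = int m - deg H E"
    using dl_divs[OF x0] deg_dl[OF fin x0] km E(3) by (auto simp: A_def effective_def dl_def)
  have "E + A \<in> divs H" "effective (E + A)" "deg H (E + A) = int m"
    using A E by (auto simp: divs_add effective_def deg_add add_nonneg_nonneg)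
  then obtain F where "F \<in> linsys H (D - (E + A))" using Pm by (auto simp: Pk_def)
  then have "F + A \<in> linsys H (D - E)" using linsys_mono[OF assms(1)] A by blast
  then show ?thesis by blast
qed




lemma rank_ge_m1: "rank H D \<ge> -1"
  by (simp add: rank_def)

context wdec begin

lemma deg_sub: "D \<in> divs H1 \<Longrightarrow> deg G D = deg H1 D"
  unfolding deg_def by (rule sum.mono_neutral_right) (use finG V1G in \<open>auto simp: divs_def\<close>)

lemma neG: "gverts G \<noteq> {}" and ne1: "gverts H1 \<noteq> {}" using v1 V1G by auto

lemma part4: assumes D: "D \<in> divs H1" shows "rank H1 D \<ge> rank G (ext0 H1 D)"
proof (cases "rank G D < 0")
  case True then show ?thesis using rank_ge_m1[of H1 D] ext0_divs[OF D] by simp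
next
  case False
  then obtain k where k: "rank G D = int k" by (metis nonneg_int_cases not_less)
  have L: "linsys H1 (D - E) \<noteq> {}" if E: "E \<in> divs H1" "effective E" "deg H1 E \<le> int k" for E
  proof -
    have "linsys G (D - E) \<noteq> {}"
      by (rule rank_use[OF wfG neG]) (use k E divs1G deg_sub in auto)
    then obtain F where F: "F \<in> linsys G (D - E)" by blast
    have "restr1 F - (D - E) \<in> prin H1"
      by (rule restr1_prin) (use F D E in \<open>auto simp: linsys_def lin_equiv_def intro: divs_diff\<close>)
    then have "restr1 F \<in> linsys H1 (D - E)"
      using F restr1_divs restr1_eff by (auto simp: linsys_def lin_equiv_def)
    then show ?thesis by blast
  qed
  have "linsys H1 D \<noteq> {}" using L[of 0] divs_0[of H1] by (simp add: effective_def)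
  then have "rank H1 D \<ge> int k"
    by (rule rank_ge[OF wf1 ne1]) (use L in auto)
  then show ?thesis using k ext0_divs[OF D] by simp
qed

lemma part3:
  assumes D1: "D1 \<in> divs H1" and D2: "D2 \<in> divs H2"
  shows "rank G (glue H1 H2 (D1, D2)) \<ge> min (rank H1 D1) (rank H2 D2)"
proof (cases "min (rank H1 D1) (rank H2 D2) < 0")
  case True then show ?thesis using rank_ge_m1[of G "glue H1 H2 (D1, D2)"] by linarith
next
  case False
  interpret s: wdec G v H2 H1 by (rule wdec_sym) (unfold_locales)
  obtain k where k: "min (rank H1 D1) (rank H2 D2) = int k" using False by (metis nonneg_int_cases not_less)
  have L: "linsys G (D1 + D2 - E) \<noteq> {}" if E: "E \<in> divs G" "effective E" "deg G E \<le> int k" for E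
  proof -
    define E1 where "E1 = ext0 H1 E"
    define E2 where "E2 = E - E1"
    have E1d: "E1 \<in> divs H1" by (simp add: E1_def ext0_def divs_def)
    have E2d: "E2 \<in> divs H2"
      using E(1) VG by (auto simp: E2_def E1_def ext0_def divs_def)
    have E1e: "effective E1" "effective E2" using E(2)
      by (auto simp: E1_def E2_def ext0_def effective_def)
    have dd: "deg G E = deg H1 E1 + deg H2 E2"
      using deg_sub[OF E1d] s.deg_sub[OF E2d] by (simp add: E2_def deg_diff)
    have "deg H1 E1 \<le> int k" "deg H2 E2 \<le> int k"
      using dd E(3) deg_eff[OF E1e(1), of H1] deg_eff[OF E1e(2), of H2] by linarith+
    moreover have "int k \<le> rank H1 D1" "int k \<le> rank H2 D2" using k by linarith+
    ultimately have "linsys H1 (D1 - E1) \<noteq> {}" "linsys H2 (D2 - E2) \<noteq> {}"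
      using rank_use[OF wf1 ne1, of k D1 E1] rank_use[OF wf2 s.ne1, of k D2 E2] E1d E2d E1e by blast+
    then obtain F1 F2 where F1: "F1 \<in> linsys H1 (D1 - E1)" and F2: "F2 \<in> linsys H2 (D2 - E2)"
      by blast
    have p1: "F1 - (D1 - E1) \<in> prin G" using F1 prin1G by (auto simp: linsys_def lin_equiv_def)
    have p2: "F2 - (D2 - E2) \<in> prin G" using F2 s.prin1G by (auto simp: linsys_def lin_equiv_def)
    have eq: "F1 + F2 - (D1 + D2 - E) = (F1 - (D1 - E1)) + (F2 - (D2 - E2))"
      by (simp add: E2_def algebra_simps)
    have pp: "F1 + F2 - (D1 + D2 - E) \<in> prin G" unfolding eq by (rule prin_add[OF wfG p1 p2])
    have "F1 + F2 \<in> linsys G (D1 + D2 - E)"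
      using F1 F2 pp divs1G s.divs1G unfolding linsys_def lin_equiv_def
      by (auto simp: effective_def intro!: divs_add add_nonneg_nonneg)
    then show ?thesis by blast
  qed
  have "linsys G (D1 + D2) \<noteq> {}" using L[of 0] divs_0[of G] by (simp add: effective_def)
  then have "rank G (D1 + D2) \<ge> int k"
    by (rule rank_ge[OF wfG neG]) (use L in auto)
  then show ?thesis using k glue_eq[OF D1 D2] by simp
qed

end



lemma Div_simps[simp]: "carrier (Div_grp H) = divs H" "x \<otimes>\<^bsub>Div_grp H\<^esub> y = x + y" "\<one>\<^bsub>Div_grp H\<^esub> = 0"
  by (simp_all add: Div_grp_def)
lemma Prin_simps[simp]: "carrier (Prin_grp H) = prin H" "x \<otimes>\<^bsub>Prin_grp H\<^esub> y = x + y" "\<one>\<^bsub>Prin_grp H\<^esub> = 0"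
  by (simp_all add: Prin_grp_def)

lemma jcls_eq: "wf_graph H \<Longrightarrow> jcls H D = {X. X - D \<in> prin H}"
  by (auto simp: jcls_def r_coset_def)

lemma jcls_same: "wf_graph H \<Longrightarrow> jcls H D = jcls H D' \<longleftrightarrow> D - D' \<in> prin H"
proof
  assume a: "wf_graph H" "jcls H D = jcls H D'"
  have "D \<in> jcls H D" using a(1) prin_0 by (simp add: jcls_eq)
  then show "D - D' \<in> prin H" using a by (simp add: jcls_eq)
next
  assume a: "wf_graph H" "D - D' \<in> prin H"
  have "X - D \<in> prin H \<longleftrightarrow> X - D' \<in> prin H" for X
  proof
    assume "X - D \<in> prin H" 
    from prin_add[OF a(1) this a(2)] show "X - D' \<in> prin H" by simp
  next
    assume "X - D' \<in> prin H" 
    from prin_diff[OF a(1) this a(2)] show "X - D \<in> prin H" by simp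
  qed
  then show "jcls H D = jcls H D'" using a by (simp add: jcls_eq)
qed

lemma Jac_carrier: "carrier (Jac_grp H) = jcls H ` divs H"
  by (auto simp: Jac_grp_def FactGroup_def RCOSETS_def jcls_def)

lemma Jac_one: "wf_graph H \<Longrightarrow> \<one>\<^bsub>Jac_grp H\<^esub> = jcls H 0"
  by (simp add: Jac_grp_def FactGroup_def jcls_eq)

lemma Jac_mult: "wf_graph H \<Longrightarrow> jcls H D \<otimes>\<^bsub>Jac_grp H\<^esub> jcls H D' = jcls H (D + D')"
proof -
  assume w: "wf_graph H"
  have "jcls H D <#>\<^bsub>Div_grp H\<^esub> jcls H D' = jcls H (D + D')"
  proof (rule Set.set_eqI)
    fix X
    show "X \<in> jcls H D <#>\<^bsub>Div_grp H\<^esub> jcls H D' \<longleftrightarrow> X \<in> jcls H (D + D')"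
    proof
      assume "X \<in> jcls H D <#>\<^bsub>Div_grp H\<^esub> jcls H D'"
      then obtain a b where ab: "a - D \<in> prin H" "b - D' \<in> prin H" "X = a + b"
        by (auto simp: set_mult_def jcls_eq[OF w])
      have eq: "X - (D + D') = (a - D) + (b - D')" using ab(3) by (simp add: algebra_simps)
      have "X - (D + D') \<in> prin H" unfolding eq by (rule prin_add[OF w ab(1,2)])
      then show "X \<in> jcls H (D + D')" by (simp add: jcls_eq[OF w])
    next
      assume "X \<in> jcls H (D + D')"
      then have "(X - D') - D \<in> prin H" by (simp add: jcls_eq[OF w] algebra_simps)
      moreover have "D' - D' \<in> prin H" using prin_0[OF w] by simp
      ultimately show "X \<in> jcls H D <#>\<^bsub>Div_grp H\<^esub> jcls H D'"
        unfolding set_mult_def jcls_eq[OF w] by force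
    qed
  qed
  then show ?thesis by (simp add: Jac_grp_def FactGroup_def)
qed

definition rep :: "('v \<Rightarrow> int) set \<Rightarrow> 'v \<Rightarrow> int" where "rep C = (SOME X. X \<in> C)"

lemma rep_jcls: "wf_graph H \<Longrightarrow> rep (jcls H D) - D \<in> prin H"
proof -
  assume w: "wf_graph H"
  have "D \<in> jcls H D" using prin_0[OF w] by (simp add: jcls_eq[OF w])
  then have "rep (jcls H D) \<in> jcls H D" unfolding rep_def by (rule someI[where P="\<lambda>X. X \<in> jcls H D"])
  then show ?thesis by (simp add: jcls_eq[OF w])
qed

lemma rep_divs: "wf_graph H \<Longrightarrow> D \<in> divs H \<Longrightarrow> rep (jcls H D) \<in> divs H"
  using rep_jcls[of H D] prin_divs[of H] divs_add[of "rep (jcls H D) - D" H D] by simp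




context wdec begin

lemma ext0_add: "ext0 H (x + y) = ext0 H x + ext0 H y"
  by (simp add: ext0_def fun_eq_iff)

lemma phi_jcls: "D \<in> divs H1 \<Longrightarrow> jcls G (rep (jcls H1 D)) = jcls G D"
  using jcls_same[OF wfG] prin1G rep_jcls[OF wf1] by blast

lemma part2: "ext0 H1 \<in> hom (Div_grp H1) (Div_grp G) \<and> inj_on (ext0 H1) (divs H1) \<and>
        ext0 H1 \<in> hom (Prin_grp H1) (Prin_grp G) \<and> inj_on (ext0 H1) (prin H1) \<and>
        (\<exists>\<phi> \<in> hom (Jac_grp H1) (Jac_grp G).
           (\<forall>D\<in>divs H1. \<phi> (jcls H1 D) = jcls G (ext0 H1 D)) \<and>
           inj_on \<phi> (carrier (Jac_grp H1)))"
proof (intro conjI)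
  show "ext0 H1 \<in> hom (Div_grp H1) (Div_grp G)"
    by (auto simp: hom_def ext0_add ext0_divs divs1G)
  show "inj_on (ext0 H1) (divs H1)" by (auto simp: inj_on_def ext0_divs)
  show "ext0 H1 \<in> hom (Prin_grp H1) (Prin_grp G)"
    by (auto simp: hom_def ext0_add ext0_divs prin_divs[OF wf1] prin1G)
  show "inj_on (ext0 H1) (prin H1)" by (auto simp: inj_on_def ext0_divs prin_divs[OF wf1])
  define \<phi> where "\<phi> = (\<lambda>C. jcls G (rep C))"
  have pj: "\<phi> (jcls H1 D) = jcls G D" if "D \<in> divs H1" for D
    using phi_jcls[OF that] by (simp add: \<phi>_def)
  have "\<phi> \<in> hom (Jac_grp H1) (Jac_grp G)"
  proof (rule homI)
    fix x assume "x \<in> carrier (Jac_grp H1)"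
    then obtain D where "D \<in> divs H1" "x = jcls H1 D" by (auto simp: Jac_carrier)
    then show "\<phi> x \<in> carrier (Jac_grp G)" using pj divs1G by (auto simp: Jac_carrier)
  next
    fix x y assume "x \<in> carrier (Jac_grp H1)" "y \<in> carrier (Jac_grp H1)"
    then obtain D D' where "D \<in> divs H1" "x = jcls H1 D" "D' \<in> divs H1" "y = jcls H1 D'" by (auto simp: Jac_carrier)
    then show "\<phi> (x \<otimes>\<^bsub>Jac_grp H1\<^esub> y) = \<phi> x \<otimes>\<^bsub>Jac_grp G\<^esub> \<phi> y"
      using pj[of "D + D'"] pj[of D] pj[of D'] divs_add[of D H1 D'] by (simp add: Jac_mult[OF wf1] Jac_mult[OF wfG])
  qed
  moreover have "\<forall>D\<in>divs H1. \<phi> (jcls H1 D) = jcls G (ext0 H1 D)" using pj by (simp add: ext0_divs)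
  moreover have "inj_on \<phi> (carrier (Jac_grp H1))"
  proof (rule inj_onI)
    fix x y assume "x \<in> carrier (Jac_grp H1)" "y \<in> carrier (Jac_grp H1)" "\<phi> x = \<phi> y"
    then obtain D D' where D: "D \<in> divs H1" "x = jcls H1 D" "D' \<in> divs H1" "y = jcls H1 D'" 
      and e: "\<phi> (jcls H1 D) = \<phi> (jcls H1 D')" by (auto simp: Jac_carrier)
    then have "D - D' \<in> prin G" using pj jcls_same[OF wfG] by simp
    then have "D - D' \<in> prin H1" using prinG_divs1 divs_diff D by blast
    then show "x = y" using D jcls_same[OF wf1] by simp
  qed
  ultimately show "\<exists>\<phi> \<in> hom (Jac_grp H1) (Jac_grp G).
           (\<forall>D\<in>divs H1. \<phi> (jcls H1 D) = jcls G (ext0 H1 D)) \<and>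
           inj_on \<phi> (carrier (Jac_grp H1))" by blast
qed

end



lemma iso_Z:
  fixes M :: "('a, 'b) monoid_scheme"
  assumes K: "K = range img" and g: "\<And>a. g (img a) = (a::int)"
    and m: "\<And>a b. img a \<otimes>\<^bsub>M\<^esub> img b = img (a + b)"
  shows "M\<lparr>carrier := K\<rparr> \<cong> integer_group"
proof -
  have "g \<in> hom (M\<lparr>carrier := K\<rparr>) integer_group"
    by (rule homI) (use K g m in auto)
  moreover have "bij_betw g K UNIV"
    unfolding bij_betw_def
  proof
    show "inj_on g K" using K g by (auto simp: inj_on_def)
    show "g ` K = UNIV" using K g by (auto simp: image_iff)
  qed
  ultimately have "g \<in> iso (M\<lparr>carrier := K\<rparr>) integer_group" by (simp add: iso_def)
  then show ?thesis unfolding is_iso_def by blast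
qed

context wdec begin

lemma glue_add: "glue H1 H2 (a + c, b + d) = glue H1 H2 (a, b) + glue H1 H2 (c, d)"
  by (simp add: glue_def ext0_def fun_eq_iff)

lemma glue_divs: "a \<in> divs H1 \<Longrightarrow> b \<in> divs H2 \<Longrightarrow> glue H1 H2 (a, b) \<in> divs G"
proof -
  interpret s: wdec G v H2 H1 by (rule wdec_sym) (unfold_locales)
  show "a \<in> divs H1 \<Longrightarrow> b \<in> divs H2 \<Longrightarrow> glue H1 H2 (a, b) \<in> divs G"
    by (simp add: glue_eq) (meson divs_add divs1G s.divs1G)
qed

lemma split_divs: "D \<in> divs G \<Longrightarrow> ext0 H1 D \<in> divs H1 \<and> D - ext0 H1 D \<in> divs H2 \<and> D = ext0 H1 D + (D - ext0 H1 D)"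
  using VG by (auto simp: ext0_def divs_def)

lemma glue_hom: "glue H1 H2 \<in> hom (Div_grp H1 \<times>\<times> Div_grp H2) (Div_grp G)"
  by (rule homI) (auto simp: glue_divs glue_add)

lemma glue_img: "glue H1 H2 ` carrier (Div_grp H1 \<times>\<times> Div_grp H2) = carrier (Div_grp G)"
proof
  show "glue H1 H2 ` carrier (Div_grp H1 \<times>\<times> Div_grp H2) \<subseteq> carrier (Div_grp G)"
    using glue_divs by auto
  show "carrier (Div_grp G) \<subseteq> glue H1 H2 ` carrier (Div_grp H1 \<times>\<times> Div_grp H2)"
  proof
    fix D assume "D \<in> carrier (Div_grp G)"
    then have s: "ext0 H1 D \<in> divs H1" "D - ext0 H1 D \<in> divs H2" "D = ext0 H1 D + (D - ext0 H1 D)"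
      using split_divs by auto
    then have "D = glue H1 H2 (ext0 H1 D, D - ext0 H1 D)" using glue_eq by simp
    then show "D \<in> glue H1 H2 ` carrier (Div_grp H1 \<times>\<times> Div_grp H2)" using s(1,2) by force
  qed
qed

lemma glue_kernel: "kernel (Div_grp H1 \<times>\<times> Div_grp H2) (Div_grp G) (glue H1 H2) = range (\<lambda>a. (dl v a, dl v (- a)))"
proof
  show "kernel (Div_grp H1 \<times>\<times> Div_grp H2) (Div_grp G) (glue H1 H2) \<subseteq> range (\<lambda>a. (dl v a, dl v (- a)))"
  proof
    fix x assume "x \<in> kernel (Div_grp H1 \<times>\<times> Div_grp H2) (Div_grp G) (glue H1 H2)"
    then obtain D1 D2 where x: "x = (D1, D2)" "D1 \<in> divs H1" "D2 \<in> divs H2" "glue H1 H2 (D1, D2) = 0"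
      by (auto simp: kernel_def)
    then have "D1 + D2 = 0" using glue_eq by simp
    then show "x \<in> range (\<lambda>a. (dl v a, dl v (- a)))" using kernel_char x by blast
  qed
  show "range (\<lambda>a. (dl v a, dl v (- a))) \<subseteq> kernel (Div_grp H1 \<times>\<times> Div_grp H2) (Div_grp G) (glue H1 H2)"
    using dl_divs[OF v1] dl_divs[OF v2] glue_eq
    by (auto simp: kernel_def dl_def fun_eq_iff)
qed

lemma part1a: "(Div_grp H1 \<times>\<times> Div_grp H2)
        \<lparr>carrier := kernel (Div_grp H1 \<times>\<times> Div_grp H2) (Div_grp G) (glue H1 H2)\<rparr>
        \<cong> integer_group"
  by (rule iso_Z[OF glue_kernel, where g = "\<lambda>x. fst x v"]) (auto simp: dl_def fun_eq_iff)

lemma part1b: "glue H1 H2 \<in> iso (Prin_grp H1 \<times>\<times> Prin_grp H2) (Prin_grp G)"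
proof -
  interpret s: wdec G v H2 H1 by (rule wdec_sym) (unfold_locales)
  have ge: "glue H1 H2 (a, b) = a + b" if "a \<in> prin H1" "b \<in> prin H2" for a b
    using glue_eq prin_divs wf1 wf2 that by blast
  have "glue H1 H2 \<in> hom (Prin_grp H1 \<times>\<times> Prin_grp H2) (Prin_grp G)"
    by (rule homI) (auto simp: ge prin_add[OF wf1] prin_add[OF wf2] prin_add[OF wfG] prin1G s.prin1G)
  moreover have "inj_on (glue H1 H2) (prin H1 \<times> prin H2)"
  proof (rule inj_onI, clarify)
    fix a b c d assume a: "a \<in> prin H1" "b \<in> prin H2" "c \<in> prin H1" "d \<in> prin H2"
      "glue H1 H2 (a, b) = glue H1 H2 (c, d)"
    then have "(a - c) + (b - d) = 0" using ge by (simp add: algebra_simps)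
    then have "a - c = 0 \<and> b - d = 0" using prin_inj prin_diff[OF wf1 a(1,3)] prin_diff[OF wf2 a(2,4)] by blast
    then show "a = c \<and> b = d" by simp
  qed
  moreover have "glue H1 H2 ` (prin H1 \<times> prin H2) = prin G"
  proof
    show "glue H1 H2 ` (prin H1 \<times> prin H2) \<subseteq> prin G"
      using ge prin_add[OF wfG] prin1G s.prin1G by auto
    show "prin G \<subseteq> glue H1 H2 ` (prin H1 \<times> prin H2)"
    proof
      fix P assume "P \<in> prin G"
      then obtain P1 P2 where "P1 \<in> prin H1" "P2 \<in> prin H2" "P = P1 + P2" using prin_split by blast
      then show "P \<in> glue H1 H2 ` (prin H1 \<times> prin H2)" using ge by force
    qed
  qed
  ultimately show ?thesis by (simp add: iso_def bij_betw_def)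
qed

end



context wdec begin

definition psi :: "('v \<Rightarrow> int) set \<times> ('v \<Rightarrow> int) set \<Rightarrow> ('v \<Rightarrow> int) set" where
  "psi C = jcls G (glue H1 H2 (rep (fst C), rep (snd C)))"

lemma psi_jcls:
  assumes "D1 \<in> divs H1" "D2 \<in> divs H2"
  shows "psi (jcls H1 D1, jcls H2 D2) = jcls G (glue H1 H2 (D1, D2))"
proof -
  have r: "rep (jcls H1 D1) \<in> divs H1" "rep (jcls H2 D2) \<in> divs H2"
    using rep_divs wf1 wf2 assms by auto
  have e: "rep (jcls H1 D1) + rep (jcls H2 D2) - (D1 + D2) = (rep (jcls H1 D1) - D1) + (rep (jcls H2 D2) - D2)"
    by (simp add: algebra_simps)
  interpret s: wdec G v H2 H1 by (rule wdec_sym) (unfold_locales)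
  have "rep (jcls H1 D1) + rep (jcls H2 D2) - (D1 + D2) \<in> prin G"
    unfolding e by (rule prin_add[OF wfG]) (use rep_jcls[OF wf1] rep_jcls[OF wf2] prin1G s.prin1G in auto)
  then show ?thesis using r assms by (simp add: psi_def glue_eq jcls_same[OF wfG])
qed

lemma JJ_carrier: "carrier (Jac_grp H1 \<times>\<times> Jac_grp H2) = (\<lambda>(D1, D2). (jcls H1 D1, jcls H2 D2)) ` (divs H1 \<times> divs H2)"
  by (auto simp: Jac_carrier)

lemma psi_hom: "psi \<in> hom (Jac_grp H1 \<times>\<times> Jac_grp H2) (Jac_grp G)"
proof (rule homI)
  fix x assume "x \<in> carrier (Jac_grp H1 \<times>\<times> Jac_grp H2)"
  then obtain D1 D2 where "D1 \<in> divs H1" "D2 \<in> divs H2" "x = (jcls H1 D1, jcls H2 D2)"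
    unfolding JJ_carrier by auto
  then show "psi x \<in> carrier (Jac_grp G)" using psi_jcls glue_divs by (auto simp: Jac_carrier)
next
  fix x y assume "x \<in> carrier (Jac_grp H1 \<times>\<times> Jac_grp H2)" "y \<in> carrier (Jac_grp H1 \<times>\<times> Jac_grp H2)"
  then obtain D1 D2 D1' D2' where d: "D1 \<in> divs H1" "D2 \<in> divs H2" "x = (jcls H1 D1, jcls H2 D2)"
    "D1' \<in> divs H1" "D2' \<in> divs H2" "y = (jcls H1 D1', jcls H2 D2')"
    unfolding JJ_carrier by auto
  then show "psi (x \<otimes>\<^bsub>Jac_grp H1 \<times>\<times> Jac_grp H2\<^esub> y) = psi x \<otimes>\<^bsub>Jac_grp G\<^esub> psi y"
    using psi_jcls[of D1 D2] psi_jcls[of D1' D2'] psi_jcls[of "D1 + D1'" "D2 + D2'"]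
      divs_add[of D1 H1 D1'] divs_add[of D2 H2 D2']
    by (simp add: Jac_mult[OF wf1] Jac_mult[OF wf2] Jac_mult[OF wfG] glue_add)
qed

lemma psi_img: "psi ` carrier (Jac_grp H1 \<times>\<times> Jac_grp H2) = carrier (Jac_grp G)"
proof
  show "psi ` carrier (Jac_grp H1 \<times>\<times> Jac_grp H2) \<subseteq> carrier (Jac_grp G)"
    using psi_hom by (auto simp: hom_def)
  show "carrier (Jac_grp G) \<subseteq> psi ` carrier (Jac_grp H1 \<times>\<times> Jac_grp H2)"
  proof
    fix C assume "C \<in> carrier (Jac_grp G)"
    then obtain D where D: "D \<in> divs G" "C = jcls G D" by (auto simp: Jac_carrier)
    then have s: "ext0 H1 D \<in> divs H1" "D - ext0 H1 D \<in> divs H2" "D = ext0 H1 D + (D - ext0 H1 D)"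
      using split_divs by auto
    then have "C = psi (jcls H1 (ext0 H1 D), jcls H2 (D - ext0 H1 D))"
      using D psi_jcls glue_eq by simp
    then show "C \<in> psi ` carrier (Jac_grp H1 \<times>\<times> Jac_grp H2)" using s(1,2) unfolding JJ_carrier by force
  qed
qed

lemma psi_kernel: "kernel (Jac_grp H1 \<times>\<times> Jac_grp H2) (Jac_grp G) psi
   = range (\<lambda>a. (jcls H1 (dl v a), jcls H2 (dl v (- a))))"
proof
  show "kernel (Jac_grp H1 \<times>\<times> Jac_grp H2) (Jac_grp G) psi \<subseteq> range (\<lambda>a. (jcls H1 (dl v a), jcls H2 (dl v (- a))))"
  proof
    fix x assume "x \<in> kernel (Jac_grp H1 \<times>\<times> Jac_grp H2) (Jac_grp G) psi"
    then have x: "x \<in> carrier (Jac_grp H1 \<times>\<times> Jac_grp H2)" "psi x = jcls G 0"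
      by (auto simp: kernel_def Jac_one[OF wfG])
    then obtain D1 D2 where d: "D1 \<in> divs H1" "D2 \<in> divs H2" "x = (jcls H1 D1, jcls H2 D2)"
      unfolding JJ_carrier by auto
    then have "jcls G (D1 + D2) = jcls G 0" using x psi_jcls glue_eq by simp
    then have "D1 + D2 \<in> prin G" using jcls_same[OF wfG] by simp
    then obtain P1 P2 where P: "P1 \<in> prin H1" "P2 \<in> prin H2" "D1 + D2 = P1 + P2" using prin_split by blast
    have "(D1 - P1) + (D2 - P2) = 0" using P(3) by (simp add: algebra_simps)
    moreover have "D1 - P1 \<in> divs H1" "D2 - P2 \<in> divs H2"
      using d P prin_divs wf1 wf2 divs_diff by blast+
    ultimately obtain a where a: "D1 - P1 = dl v a" "D2 - P2 = dl v (- a)" using kernel_char by blast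
    have "D1 - dl v a = P1" by (simp add: a(1)[symmetric] algebra_simps)
    then have "jcls H1 D1 = jcls H1 (dl v a)" using jcls_same[OF wf1] P(1) by simp
    moreover have "D2 - dl v (- a) = P2" by (simp add: a(2)[symmetric] algebra_simps)
    then have "jcls H2 D2 = jcls H2 (dl v (- a))" using jcls_same[OF wf2] P(2) by simp
    ultimately show "x \<in> range (\<lambda>a. (jcls H1 (dl v a), jcls H2 (dl v (- a))))" using d by auto
  qed
  show "range (\<lambda>a. (jcls H1 (dl v a), jcls H2 (dl v (- a)))) \<subseteq> kernel (Jac_grp H1 \<times>\<times> Jac_grp H2) (Jac_grp G) psi"
  proof clarify
    fix a
    have d: "dl v a \<in> divs H1" "dl v (- a) \<in> divs H2" using dl_divs[OF v1] dl_divs[OF v2] by auto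
    have "dl v a + dl v (- a) = 0" by (simp add: dl_def fun_eq_iff)
    then have "psi (jcls H1 (dl v a), jcls H2 (dl v (- a))) = \<one>\<^bsub>Jac_grp G\<^esub>"
      using psi_jcls[OF d] glue_eq[OF d] Jac_one[OF wfG] by simp
    then show "(jcls H1 (dl v a), jcls H2 (dl v (- a))) \<in> kernel (Jac_grp H1 \<times>\<times> Jac_grp H2) (Jac_grp G) psi"
      using d by (auto simp: kernel_def Jac_carrier)
  qed
qed

lemma deg_rep: "deg H1 (rep (jcls H1 (dl v a))) = a"
proof -
  have "deg H1 (rep (jcls H1 (dl v a)) - dl v a) = 0" using deg_prin[OF wf1 rep_jcls[OF wf1]] .
  then show ?thesis using deg_dl[OF fin1 v1] by (simp add: deg_diff)
qed

lemma part1c: "(Jac_grp H1 \<times>\<times> Jac_grp H2)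
           \<lparr>carrier := kernel (Jac_grp H1 \<times>\<times> Jac_grp H2) (Jac_grp G) psi\<rparr>
           \<cong> integer_group"
proof (rule iso_Z[OF psi_kernel, where g = "\<lambda>x. deg H1 (rep (fst x))"])
  show "\<And>a. deg H1 (rep (fst (jcls H1 (dl v a), jcls H2 (dl v (- a))))) = a" using deg_rep by simp
  fix a b
  have "dl v a + dl v b = dl v (a + b)" "dl v (- a) + dl v (- b) = dl v (- (a + b))"
    by (auto simp: dl_def fun_eq_iff)
  then show "(jcls H1 (dl v a), jcls H2 (dl v (- a))) \<otimes>\<^bsub>Jac_grp H1 \<times>\<times> Jac_grp H2\<^esub> (jcls H1 (dl v b), jcls H2 (dl v (- b))) =
         (jcls H1 (dl v (a + b)), jcls H2 (dl v (- (a + b))))"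
    by (simp add: Jac_mult[OF wf1] Jac_mult[OF wf2])
qed

end


theorem lemma2p5:
  fixes G H1 H2 :: "('v, 'e) mgraph" and v :: 'v
  assumes conn: "connected_graph G"
    and cut: "cut_vertex G v"
    and dec: "wedge_decomp G v H1 H2"
  shows
    \<comment> \<open>(1)\<close>
    "(glue H1 H2 \<in> hom (Div_grp H1 \<times>\<times> Div_grp H2) (Div_grp G) \<and>
      glue H1 H2 ` carrier (Div_grp H1 \<times>\<times> Div_grp H2) = carrier (Div_grp G) \<and>
      (Div_grp H1 \<times>\<times> Div_grp H2)
        \<lparr>carrier := kernel (Div_grp H1 \<times>\<times> Div_grp H2) (Div_grp G) (glue H1 H2)\<rparr>
        \<cong> integer_group \<and>
      glue H1 H2 \<in> iso (Prin_grp H1 \<times>\<times> Prin_grp H2) (Prin_grp G) \<and>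
      (\<exists>\<psi> \<in> hom (Jac_grp H1 \<times>\<times> Jac_grp H2) (Jac_grp G).
         (\<forall>D1\<in>divs H1. \<forall>D2\<in>divs H2.
            \<psi> (jcls H1 D1, jcls H2 D2) = jcls G (glue H1 H2 (D1, D2))) \<and>
         \<psi> ` carrier (Jac_grp H1 \<times>\<times> Jac_grp H2) = carrier (Jac_grp G) \<and>
         (Jac_grp H1 \<times>\<times> Jac_grp H2)
           \<lparr>carrier := kernel (Jac_grp H1 \<times>\<times> Jac_grp H2) (Jac_grp G) \<psi>\<rparr>
           \<cong> integer_group))
     \<and>
     \<comment> \<open>(2)\<close>
     (\<forall>H\<in>{H1, H2}.
        ext0 H \<in> hom (Div_grp H) (Div_grp G) \<and> inj_on (ext0 H) (divs H) \<and>
        ext0 H \<in> hom (Prin_grp H) (Prin_grp G) \<and> inj_on (ext0 H) (prin H) \<and>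
        (\<exists>\<phi> \<in> hom (Jac_grp H) (Jac_grp G).
           (\<forall>D\<in>divs H. \<phi> (jcls H D) = jcls G (ext0 H D)) \<and>
           inj_on \<phi> (carrier (Jac_grp H))))
     \<and>
     \<comment> \<open>(3)\<close>
     (\<forall>D1\<in>divs H1. \<forall>D2\<in>divs H2.
        rank G (glue H1 H2 (D1, D2)) \<ge> min (rank H1 D1) (rank H2 D2))
     \<and>
     \<comment> \<open>(4)\<close>
     (\<forall>H\<in>{H1, H2}. \<forall>D\<in>divs H. rank H D \<ge> rank G (ext0 H D))"
proof -
  have wfG: "wf_graph G" using conn by (simp add: connected_graph_def)
  interpret w: wdec G v H1 H2 using wfG dec by (simp add: wdec_def)
  interpret s: wdec G v H2 H1 using wfG dec by (auto simp: wdec_def wedge_decomp_def)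
  have J: "\<exists>\<psi> \<in> hom (Jac_grp H1 \<times>\<times> Jac_grp H2) (Jac_grp G).
         (\<forall>D1\<in>divs H1. \<forall>D2\<in>divs H2.
            \<psi> (jcls H1 D1, jcls H2 D2) = jcls G (glue H1 H2 (D1, D2))) \<and>
         \<psi> ` carrier (Jac_grp H1 \<times>\<times> Jac_grp H2) = carrier (Jac_grp G) \<and>
         (Jac_grp H1 \<times>\<times> Jac_grp H2)
           \<lparr>carrier := kernel (Jac_grp H1 \<times>\<times> Jac_grp H2) (Jac_grp G) \<psi>\<rparr>
           \<cong> integer_group"
    using w.psi_hom w.psi_jcls w.psi_img w.part1c by blast
  show ?thesis
    using J w.glue_hom w.glue_img w.part1a w.part1b w.part2 s.part2 w.part3 w.part4 s.part4
    by auto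
qed

end
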